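(* Let $\mathbf{M},\bm{\Gamma}_1,\dots,\bm{\Gamma}_L$ be nonsingular $D\times D$ integer matrices that are pairwise commutative and coprime, and let $\mathbf{M}_i=\mathbf{M}\bm{\Gamma}_i$, $1\le i\le L$. Then for every unimodular $\mathbf{U}$, $\mathbf{R}=\mathbf{M}\bm{\Gamma}_1\cdots\bm{\Gamma}_L\mathbf{U}$ is an lcrm of $\mathbf{M}_1,\dots,\mathbf{M}_L$, and with $\mathbf{N}_1=\mathbf{M}\bm{\Gamma}_1$, $\mathbf{N}_i=\bm{\Gamma}_i$ ($2\le i\le L$), $\mathbf{W}_i=\mathbf{N}_1\cdots\mathbf{N}_{i-1}\mathbf{N}_{i+1}\cdots\mathbf{N}_L$, and integer matrices $\widehat{\mathbf{W}}_i$ chosen so that $\mathbf{W}_i\widehat{\mathbf{W}}_i+\mathbf{N}_i\mathbf{Q}_i=\mathbf{I}$ for some integer $\mathbf{Q}_i$ if $\mathbf{N}_i$ is not unimodular (and $\widehat{\mathbf{W}}_i=\mathbf{0}$ otherwise), every $\mathbf{m}\in\mathcal{N}(\mathbf{R})$ satisfies $\mathbf{m}=\big\langle\sum_{i=1}^L\mathbf{W}_i\widehat{\mathbf{W}}_i\langle\mathbf{m}\rangle_{\mathbf{M}_i}\big\rangle_{\mathbf{R}}$; in particular $\mathbf{m}$ is uniquely determined by its remainders modulo $\mathbf{M}_1,\dots,\mathbf{M}_L$.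
   Context: All matrices are $D\times D$ integer matrices; unimodular means integer with determinant $\pm1$. Commuting nonsingular integer matrices are coprime if all their common left (equivalently right) divisors are unimodular, where $\mathbf{A}$ is a left divisor of $\mathbf{M}$ if $\mathbf{A}^{-1}\mathbf{M}$ is integer. An lcrm of $\mathbf{M}_1,\dots,\mathbf{M}_L$ is a nonsingular integer $\mathbf{R}=\mathbf{M}_i\mathbf{P}_i$ (integer $\mathbf{P}_i$, all $i$) such that every such common right multiple equals $\mathbf{R}\mathbf{A}$ for integer $\mathbf{A}$. $\mathcal{N}(\mathbf{M})=\{\mathbf{k}\in\mathbb{Z}^D:\mathbf{k}=\mathbf{M}\mathbf{x},\ \mathbf{x}\in[0,1)^D\}$; $\langle\mathbf{m}\rangle_{\mathbf{M}}$ is the unique $\mathbf{r}\in\mathcal{N}(\mathbf{M})$ with $\mathbf{m}-\mathbf{r}\in\mathbf{M}\mathbb{Z}^D$. *)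

theory Defs
  imports "HOL-Analysis.Analysis"
begin

type_synonym 'n imat = "int ^ 'n ^ 'n"

definition nonsingular :: "'n::finite imat \<Rightarrow> bool" where
  "nonsingular A \<longleftrightarrow> det A \<noteq> 0"

definition unimodular :: "'n::finite imat \<Rightarrow> bool" where
  "unimodular U \<longleftrightarrow> det U = 1 \<or> det U = -1"

definition left_divisor :: "'n::finite imat \<Rightarrow> 'n imat \<Rightarrow> bool" where
  "left_divisor A M \<longleftrightarrow> nonsingular A \<and> (\<exists>X. M = A ** X)"

definition mat_coprime :: "'n::finite imat \<Rightarrow> 'n imat \<Rightarrow> bool" where
  "mat_coprime A B \<longleftrightarrow>
     (\<forall>C. left_divisor C A \<and> left_divisor C B \<longrightarrow> unimodular C)"

definition mat_prod_list :: "'n::finite imat list \<Rightarrow> 'n imat" where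
  "mat_prod_list Ms = foldr (\<lambda>A B. A ** B) Ms (mat 1)"

definition is_lcrm :: "(nat \<Rightarrow> 'n::finite imat) \<Rightarrow> nat \<Rightarrow> 'n imat \<Rightarrow> bool" where
  "is_lcrm Ms L R \<longleftrightarrow>
     nonsingular R \<and> (\<forall>i\<in>{1..L}. \<exists>P. R = Ms i ** P) \<and>
     (\<forall>R'. nonsingular R' \<and> (\<forall>i\<in>{1..L}. \<exists>P. R' = Ms i ** P) \<longrightarrow> (\<exists>A. R' = R ** A))"

definition real_mat :: "'n::finite imat \<Rightarrow> real ^ 'n ^ 'n" where
  "real_mat M = (\<chi> i j. real_of_int (M $ i $ j))"

definition real_vec :: "int ^ 'n \<Rightarrow> real ^ 'n" where
  "real_vec k = (\<chi> i. real_of_int (k $ i))"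

definition fund_set :: "'n::finite imat \<Rightarrow> (int ^ 'n) set" where
  "fund_set M = {k. \<exists>x::real^'n. (\<forall>i. 0 \<le> x $ i \<and> x $ i < 1) \<and> real_vec k = real_mat M *v x}"

definition mat_rem :: "int ^ 'n \<Rightarrow> 'n::finite imat \<Rightarrow> int ^ 'n" where
  "mat_rem m M = (THE r. r \<in> fund_set M \<and> (\<exists>z. m - r = M *v z))"

end

theory Submission
  imports Defs
begin

lemma rm_mult: "real_mat (A ** B) = real_mat A ** real_mat B"
  by (simp add: real_mat_def matrix_matrix_mult_def vec_eq_iff of_int_sum)
lemma rv_mult: "real_vec (A *v x) = real_mat A *v real_vec x"
  by (simp add: real_mat_def real_vec_def matrix_vector_mult_def vec_eq_iff of_int_sum)
lemma det_rm: "det (real_mat A) = of_int (det A)"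
  by (simp add: det_def real_mat_def of_int_sum)
lemma rm_inj: "real_mat A = real_mat B \<Longrightarrow> A = B"
  by (simp add: real_mat_def vec_eq_iff)
lemma rv_inj: "real_vec x = real_vec y \<Longrightarrow> x = y"
  by (simp add: real_vec_def vec_eq_iff)

lemma rm_add: "real_mat (A + B) = real_mat A + real_mat B"
  by (simp add: real_mat_def vec_eq_iff)
lemma rm_one: "real_mat (mat 1) = mat 1"
  by (simp add: real_mat_def vec_eq_iff mat_def)

lemma nonsing_invertible: "det (A::'n::finite imat) \<noteq> 0 \<Longrightarrow> invertible (real_mat A)"
  by (simp add: invertible_det_nz det_rm)

lemma cancel_left:
  fixes A X Y :: "'n::finite imat"
  assumes "det A \<noteq> 0" "A ** X = A ** Y" shows "X = Y"
proof -
  obtain B where B: "B ** real_mat A = mat 1"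
    using nonsing_invertible[OF assms(1)] unfolding invertible_def by blast
  have "real_mat A ** real_mat X = real_mat A ** real_mat Y" using assms(2) by (metis rm_mult)
  then have "B ** (real_mat A ** real_mat X) = B ** (real_mat A ** real_mat Y)" by simp
  then have "(B ** real_mat A) ** real_mat X = (B ** real_mat A) ** real_mat Y"
    by (simp only: matrix_mul_assoc)
  then have "real_mat X = real_mat Y" by (simp only: B matrix_mul_lid)
  then show ?thesis by (rule rm_inj)
qed

lemma cancel_right:
  fixes A X Y :: "'n::finite imat"
  assumes "det A \<noteq> 0" "X ** A = Y ** A" shows "X = Y"
proof -
  obtain B where B: "real_mat A ** B = mat 1"
    using nonsing_invertible[OF assms(1)] unfolding invertible_def by blast
  have "real_mat X ** real_mat A = real_mat Y ** real_mat A" using assms(2) by (metis rm_mult)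
  then have "(real_mat X ** real_mat A) ** B = (real_mat Y ** real_mat A) ** B" by simp
  then have "real_mat X ** (real_mat A ** B) = real_mat Y ** (real_mat A ** B)"
    by (simp only: matrix_mul_assoc)
  then have "real_mat X = real_mat Y" by (simp only: B matrix_mul_rid)
  then show ?thesis by (rule rm_inj)
qed

lemma cancel_vec:
  fixes A :: "'n::finite imat"
  assumes "det A \<noteq> 0" "A *v x = A *v y" shows "x = y"
proof -
  obtain B where B: "B ** real_mat A = mat 1"
    using nonsing_invertible[OF assms(1)] unfolding invertible_def by blast
  have "real_mat A *v real_vec x = real_mat A *v real_vec y" using assms(2) by (metis rv_mult)
  then have "B *v (real_mat A *v real_vec x) = B *v (real_mat A *v real_vec y)" by simp
  then have "(B ** real_mat A) *v real_vec x = (B ** real_mat A) *v real_vec y"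
    by (simp only: matrix_vector_mul_assoc)
  then have "real_vec x = real_vec y" by (simp only: B matrix_vector_mul_lid)
  then show ?thesis by (rule rv_inj)
qed

definition adj :: "'n::finite imat \<Rightarrow> 'n imat" where
  "adj A = (\<chi> k i. det (\<chi> r c. if c = k then (if r = i then 1 else 0) else A$r$c))"

lemma adj_col:
  fixes A :: "'n::finite imat"
  assumes "det A \<noteq> 0"
  shows "A *v column i (adj A) = det A *s axis i 1"
proof -
  let ?b = "real_vec (axis i 1 :: int^'n)"
  let ?x = "\<chi> k. det(\<chi> r j. if j=k then ?b$r else real_mat A$r$j) / det (real_mat A)"
  have d: "det (real_mat A) \<noteq> 0" using assms by (simp add: det_rm)
  have c: "real_mat A *v ?x = ?b" using cramer[OF d] by blast
  have e: "\<And>k. det(\<chi> r j. if j=k then ?b$r else real_mat A$r$j) = of_int (adj A $ k $ i)"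
  proof -
    fix k
    have "(\<chi> r j. if j=k then ?b$r else real_mat A$r$j) =
       real_mat (\<chi> r c. if c = k then (if r = i then 1 else 0) else A$r$c)"
      by (simp add: real_mat_def real_vec_def vec_eq_iff axis_def)
    then show "det(\<chi> r j. if j=k then ?b$r else real_mat A$r$j) = of_int (adj A $ k $ i)"
      by (simp add: det_rm adj_def)
  qed
  have x: "?x = (1 / of_int (det A)) *s real_vec (column i (adj A))"
    by (simp add: e det_rm vec_eq_iff real_vec_def column_def)
  have xx: "of_int (det A) *s ?x = real_vec (column i (adj A))"
    using assms by (simp add: x vec_eq_iff)
  have "real_mat A *v real_vec (column i (adj A)) = real_mat A *v (of_int (det A) *s ?x)"
    by (simp only: xx)
  also have "\<dots> = of_int (det A) *s ?b"
    by (simp only: vector_scalar_commute c)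
  finally have 1: "real_mat A *v real_vec (column i (adj A)) = of_int (det A) *s ?b" .
  have 2: "real_vec (det A *s axis i 1) = of_int (det A) *s ?b" by (simp add: real_vec_def vec_eq_iff)
  have "real_vec (A *v column i (adj A)) = real_vec (det A *s axis i 1)"
    unfolding rv_mult 2 by (rule 1)
  then show ?thesis by (rule rv_inj)
qed

lemma adj_right:
  fixes A :: "'n::finite imat"
  assumes "det A \<noteq> 0" shows "A ** adj A = mat (det A)"
proof -
  have "\<And>r i. (A ** adj A) $ r $ i = (A *v column i (adj A)) $ r"
    by (simp add: matrix_matrix_mult_def matrix_vector_mult_def column_def)
  then show ?thesis using adj_col[OF assms]
    by (simp add: vec_eq_iff mat_def axis_def)
qed

lemma scal_mat_left: "mat (c::int) ** (X::'n::finite imat) = (\<chi> i j. c * X$i$j)"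
  unfolding matrix_matrix_mult_def mat_def
  by (auto simp: vec_eq_iff if_distrib if_distribR sum.delta'[OF finite] cong: if_cong)
lemma scal_mat_right: "(X::'n::finite imat) ** mat c = (\<chi> i j. c * X$i$j)"
  unfolding matrix_matrix_mult_def mat_def
  by (auto simp: vec_eq_iff if_distrib if_distribR sum.delta[OF finite] mult.commute cong: if_cong)
lemma scal_mat_comm: "mat (c::int) ** (X::'n::finite imat) = X ** mat c"
  by (simp add: scal_mat_left scal_mat_right)

lemma adj_left:
  fixes A :: "'n::finite imat"
  assumes "det A \<noteq> 0" shows "adj A ** A = mat (det A)"
proof (rule cancel_left[OF assms])
  have "A ** (adj A ** A) = (A ** adj A) ** A" by (simp add: matrix_mul_assoc)
  also have "\<dots> = A ** mat (det A)" by (simp add: adj_right[OF assms] scal_mat_comm)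
  finally show "A ** (adj A ** A) = A ** mat (det A)" .
qed

lemma mat_mult_mat: "mat (a::int) ** (mat b :: 'n::finite imat) = mat (a*b)"
  unfolding scal_mat_left by (simp add: mat_def vec_eq_iff)

lemma unimod_inv:
  fixes U :: "'n::finite imat"
  assumes "det U = 1 \<or> det U = -1"
  shows "\<exists>V. U ** V = mat 1 \<and> V ** U = mat 1"
proof -
  have d: "det U \<noteq> 0" "det U * det U = 1" using assms by auto
  let ?V = "mat (det U) ** adj U"
  have "U ** ?V = mat 1"
  proof -
    have "U ** ?V = (U ** adj U) ** mat (det U)" by (simp add: scal_mat_comm matrix_mul_assoc)
    also have "\<dots> = mat 1" by (simp add: adj_right[OF d(1)] mat_mult_mat d(2))
    finally show ?thesis .
  qed
  moreover have "?V ** U = mat 1"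
    by (simp add: matrix_mul_assoc[symmetric] adj_left[OF d(1)] mat_mult_mat d(2))
  ultimately show ?thesis by blast
qed

lemma rv_diff: "real_vec (a - b) = real_vec a - real_vec b"
  by (simp add: real_vec_def vec_eq_iff)

lemma fund_rem_ex:
  fixes R :: "'n::finite imat"
  assumes "det R \<noteq> 0"
  shows "\<exists>r\<in>fund_set R. \<exists>z. m - r = R *v z"
proof -
  obtain B where B: "real_mat R ** B = mat 1"
    using nonsing_invertible[OF assms] unfolding invertible_def by blast
  define y where "y = B *v real_vec m"
  define z :: "int^'n" where "z = (\<chi> i. floor (y$i))"
  define x where "x = y - real_vec z"
  have x01: "\<forall>i. 0 \<le> x $ i \<and> x $ i < 1"
    by (simp add: x_def z_def real_vec_def) linarith
  have "real_vec (m - R *v z) = real_mat R *v x"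
  proof -
    have "real_vec m = real_mat R *v y" by (simp add: y_def matrix_vector_mul_assoc B)
    then show ?thesis by (simp add: rv_diff rv_mult x_def matrix_vector_mult_diff_distrib)
  qed
  then have "m - R *v z \<in> fund_set R" using x01 unfolding fund_set_def by blast
  moreover have "m - (m - R *v z) = R *v z" by simp
  ultimately show ?thesis by blast
qed

lemma fund_rem_uniq:
  fixes R :: "'n::finite imat"
  assumes "det R \<noteq> 0" "r \<in> fund_set R" "r' \<in> fund_set R" "r - r' = R *v z"
  shows "r = r'"
proof -
  obtain B where B: "B ** real_mat R = mat 1"
    using nonsing_invertible[OF assms(1)] unfolding invertible_def by blast
  obtain x where x: "\<forall>i. 0 \<le> x $ i \<and> x $ i < 1" "real_vec r = real_mat R *v x"
    using assms(2) unfolding fund_set_def by blast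
  obtain x' where x': "\<forall>i. 0 \<le> x' $ i \<and> x' $ i < 1" "real_vec r' = real_mat R *v x'"
    using assms(3) unfolding fund_set_def by blast
  have "real_mat R *v (x - x') = real_mat R *v real_vec z"
    using arg_cong[OF assms(4), of real_vec] x(2) x'(2)
    by (simp add: rv_diff rv_mult matrix_vector_mult_diff_distrib)
  then have "B *v (real_mat R *v (x - x')) = B *v (real_mat R *v real_vec z)" by simp
  then have e: "x - x' = real_vec z" by (simp add: matrix_vector_mul_assoc B)
  have "z = 0"
  proof -
    have "\<And>i. z $ i = 0"
    proof -
      fix i
      have "real_of_int (z $ i) = x $ i - x' $ i" using e by (simp add: vec_eq_iff real_vec_def)
      then have "- 1 < real_of_int (z $ i)" "real_of_int (z $ i) < 1" using x(1) x'(1)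
        using x(1)[rule_format, of i] x'(1)[rule_format, of i] by linarith+
      then show "z $ i = 0" by linarith
    qed
    then show ?thesis by (simp add: vec_eq_iff)
  qed
  then show ?thesis using assms(4) by simp
qed

lemma mat_rem_prop:
  fixes R :: "'n::finite imat"
  assumes "det R \<noteq> 0"
  shows "mat_rem m R \<in> fund_set R \<and> (\<exists>z. m - mat_rem m R = R *v z)"
proof -
  have "\<exists>!r. r \<in> fund_set R \<and> (\<exists>z. m - r = R *v z)"
  proof -
    obtain r z where r: "r \<in> fund_set R" "m - r = R *v z" using fund_rem_ex[OF assms] by blast
    moreover have "r' = r" if "r' \<in> fund_set R" "m - r' = R *v z'" for r' z'
    proof -
      have "r' - r = (m - r) - (m - r')" by simp
      then have "r' - r = R *v (z - z')" using r(2) that(2)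
        by (simp add: matrix_vector_mult_diff_distrib)
      then show ?thesis using fund_rem_uniq[OF assms that(1) r(1)] by blast
    qed
    ultimately show ?thesis by blast
  qed
  then show ?thesis unfolding mat_rem_def by (rule theI')
qed

lemma mat_rem_eq:
  fixes R :: "'n::finite imat"
  assumes "det R \<noteq> 0" "r \<in> fund_set R" "m - r = R *v z"
  shows "mat_rem m R = r"
proof -
  obtain z' where z': "m - mat_rem m R = R *v z'" and f: "mat_rem m R \<in> fund_set R"
    using mat_rem_prop[OF assms(1)] by blast
  have "mat_rem m R - r = (m - r) - (m - mat_rem m R)" by simp
  then have "mat_rem m R - r = R *v (z - z')" using z' assms(3)
    by (simp add: matrix_vector_mult_diff_distrib)
  then show ?thesis using fund_rem_uniq[OF assms(1) f assms(2)] by blast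
qed

lemma mv_scal: "(A::'a::comm_ring_1^'m^'n) *v (c *s x) = c *s (A *v x)"
  by (simp add: vector_scalar_mult_def matrix_vector_mult_def mult_ac sum_distrib_left)


definition colmat :: "('n::finite \<Rightarrow> int^'n) \<Rightarrow> 'n imat" where
  "colmat u = (\<chi> r k. u k $ r)"

lemma colmat_mult: "(C ** colmat u) $ r $ k = (C *v u k) $ r"
  by (simp add: colmat_def matrix_matrix_mult_def matrix_vector_mult_def)

lemma col_axis: "(A::'n::finite imat) *v axis j 1 = column j A"
  by (simp add: matrix_vector_mult_def axis_def column_def vec_eq_iff if_distrib if_distribR sum.delta'[OF finite] cong: if_cong)

lemma mat_eq_cols: "(\<And>k. (M::'n::finite imat) *v axis k 1 = N *v axis k 1) \<Longrightarrow> M = N"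
  by (simp add: col_axis vec_eq_iff column_def)

lemma det_mat: "det (mat (a::int) :: 'n::finite imat) = a ^ CARD('n)"
  by (simp add: det_diagonal mat_def)

locale lat =
  fixes G :: "(int^'n::finite) set" and \<alpha> :: int
  assumes gadd: "x \<in> G \<Longrightarrow> y \<in> G \<Longrightarrow> x + y \<in> G"
    and gscale: "x \<in> G \<Longrightarrow> c *s x \<in> G"
    and gax: "\<alpha> *s axis i 1 \<in> G"
    and anz: "\<alpha> \<noteq> 0"
begin

lemma g0: "0 \<in> G"
  using gscale[OF gax, of 0] by simp

lemma gsum: "finite F \<Longrightarrow> (\<forall>j\<in>F. f j \<in> G) \<Longrightarrow> sum f F \<in> G"
  by (induct F rule: finite_induct) (auto intro: g0 gadd)

lemma basis_aux:
  assumes "finite J"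
  shows "\<exists>b. (\<forall>j\<in>J. b j \<in> G \<and> (\<forall>k. k \<notin> J \<longrightarrow> b j $ k = 0)) \<and>
     (\<forall>x\<in>G. (\<forall>k. k\<notin>J \<longrightarrow> x$k = 0) \<longrightarrow> (\<exists>c. x = (\<Sum>j\<in>J. c j *s b j)))"
  using assms
proof (induct J rule: finite_induct)
  case empty
  have "x = 0" if "\<forall>k. x$k = 0" for x :: "int^'n" using that by (simp add: vec_eq_iff)
  then show ?case by auto
next
  case (insert i J)
  obtain b where b1: "\<forall>j\<in>J. b j \<in> G \<and> (\<forall>k. k \<notin> J \<longrightarrow> b j $ k = 0)"
    and b2: "\<forall>x\<in>G. (\<forall>k. k\<notin>J \<longrightarrow> x$k = 0) \<longrightarrow> (\<exists>c. x = (\<Sum>j\<in>J. c j *s b j))"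
    using insert(3) by blast
  define P where "P = (\<lambda>x. x \<in> G \<and> (\<forall>k. k \<notin> insert i J \<longrightarrow> x$k = 0))"
  have Pscale: "P x \<Longrightarrow> P (c *s x)" for x c using gscale by (auto simp: P_def)
  have Padd: "P x \<Longrightarrow> P y \<Longrightarrow> P (x + y)" for x y using gadd by (auto simp: P_def)
  have Pax: "P (\<alpha> *s axis i 1)" using gax by (auto simp: P_def axis_def)
  define Q where "Q = (\<lambda>k::nat. k > 0 \<and> (\<exists>x. P x \<and> x $ i = int k))"
  have exQ: "Q (nat \<bar>\<alpha>\<bar>)"
  proof -
    have "P (sgn \<alpha> *s (\<alpha> *s axis i 1))" by (rule Pscale[OF Pax])
    moreover have "(sgn \<alpha> *s (\<alpha> *s axis i 1)) $ i = int (nat \<bar>\<alpha>\<bar>)"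
      using anz by (cases "\<alpha> > 0") (auto simp: axis_def)
    ultimately show ?thesis using anz unfolding Q_def by auto
  qed
  define n where "n = (LEAST k. Q k)"
  have Qn: "Q n" unfolding n_def by (rule LeastI[of Q, OF exQ])
  then obtain x0 where x0: "P x0" "x0 $ i = int n" and npos: "n > 0" unfolding Q_def by blast
  have main: "\<exists>t. x $ i = t * int n" if "P x" for x
  proof -
    define t where "t = x $ i div int n"
    have Px': "P (x + (-t) *s x0)" using Padd[OF that Pscale[OF x0(1)]] .
    have "(x + (-t) *s x0) $ i = x $ i - t * int n" by (simp add: x0(2))
    also have "\<dots> = x $ i mod int n" by (simp add: t_def minus_div_mult_eq_mod)
    finally have e: "(x + (-t) *s x0) $ i = x $ i mod int n" .
    have "x $ i mod int n = 0"
    proof (rule ccontr)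
      assume ne: "x $ i mod int n \<noteq> 0"
      have "int n > 0" using npos by simp
      then have pos: "x $ i mod int n > 0" using ne pos_mod_sign[of "int n" "x$i"] by linarith
      have ii: "int (nat (x $ i mod int n)) = x $ i mod int n" using pos by simp
      have "Q (nat (x $ i mod int n))" unfolding Q_def
        apply (rule conjI)
        using pos apply simp
        apply (rule exI[of _ "x + (-t) *s x0"])
        using Px' e ii by simp
      then have "n \<le> nat (x $ i mod int n)" unfolding n_def by (rule Least_le)
      moreover have "x $ i mod int n < int n" using npos by simp
      ultimately show False using ii by linarith
    qed
    moreover have "x $ i div int n * int n + x $ i mod int n = x $ i" by (rule div_mult_mod_eq)
    ultimately have "x $ i = (x $ i div int n) * int n" by linarith
    then show ?thesis by blast
  qed
  define b' where "b' = b(i := x0)"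
  have "\<forall>j\<in>insert i J. b' j \<in> G \<and> (\<forall>k. k \<notin> insert i J \<longrightarrow> b' j $ k = 0)"
  proof
    fix j assume j: "j \<in> insert i J"
    show "b' j \<in> G \<and> (\<forall>k. k \<notin> insert i J \<longrightarrow> b' j $ k = 0)"
    proof (cases "j = i")
      case True
      then show ?thesis using x0(1) unfolding b'_def P_def by simp
    next
      case False
      then have "j \<in> J" using j by simp
      then show ?thesis using b1 False unfolding b'_def by simp
    qed
  qed
  moreover have "\<exists>c. x = (\<Sum>j\<in>insert i J. c j *s b' j)"
    if xG: "x \<in> G" and xs: "\<forall>k. k\<notin>insert i J \<longrightarrow> x$k = 0" for x
  proof -
    have Px: "P x" using xG xs by (simp add: P_def)
    obtain t where t: "x $ i = t * int n" using main[OF Px] by blast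
    have Py: "P (x + (-t) *s x0)" using Padd[OF Px Pscale[OF x0(1)]] .
    have "\<forall>k. k\<notin>J \<longrightarrow> (x + (-t) *s x0)$k = 0"
    proof (intro allI impI)
      fix k assume k: "k \<notin> J"
      show "(x + (-t) *s x0)$k = 0"
      proof (cases "k = i")
        case True
        then show ?thesis using t x0(2) by simp
      next
        case False
        then have "k \<notin> insert i J" using k by simp
        then show ?thesis using Py unfolding P_def by blast
      qed
    qed
    moreover have "x + (-t) *s x0 \<in> G" using Py unfolding P_def by blast
    ultimately obtain c where c: "x + (-t) *s x0 = (\<Sum>j\<in>J. c j *s b j)"
      using b2 by (meson bspec)
    have "(\<Sum>j\<in>insert i J. (c(i:=t)) j *s b' j) = t *s x0 + (\<Sum>j\<in>J. c j *s b j)"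
      using insert(1,2) by (simp add: b'_def) (rule sum.cong, auto)
    also have "\<dots> = x" unfolding c[symmetric] by (simp add: vec_eq_iff algebra_simps)
    finally have "(\<Sum>j\<in>insert i J. (c(i:=t)) j *s b' j) = x" .
    then show ?thesis by (intro exI[of _ "c(i:=t)"]) simp
  qed
  ultimately show ?case by blast
qed

lemma basis:
  "\<exists>C. det C \<noteq> 0 \<and> (\<forall>x. x \<in> G \<longleftrightarrow> (\<exists>y. x = C *v y))"
proof -
  obtain b :: "'n \<Rightarrow> int^'n" where b1: "\<forall>j. b j \<in> G"
    and b2: "\<forall>x\<in>G. \<exists>c. x = (\<Sum>j\<in>UNIV. c j *s b j)"
  proof -
    have "finite (UNIV::'n set)" by simp
    define PB where "PB = (\<lambda>b::'n \<Rightarrow> int^'n. (\<forall>j\<in>UNIV. b j \<in> G \<and> (\<forall>k. k \<notin> UNIV \<longrightarrow> b j $ k = 0)) \<and>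
      (\<forall>x\<in>G. (\<forall>k. k\<notin>UNIV \<longrightarrow> x$k = 0) \<longrightarrow> (\<exists>c. x = (\<Sum>j\<in>UNIV. c j *s b j))))"
    have ex: "\<exists>b. PB b" unfolding PB_def using basis_aux[of UNIV] by simp
    define b where "b = (SOME b. PB b)"
    have bb: "PB b" unfolding b_def by (rule someI_ex[OF ex])
    then have bb: "(\<forall>j\<in>UNIV. b j \<in> G \<and> (\<forall>k. k \<notin> UNIV \<longrightarrow> b j $ k = 0)) \<and>
      (\<forall>x\<in>G. (\<forall>k. k\<notin>UNIV \<longrightarrow> x$k = 0) \<longrightarrow> (\<exists>c. x = (\<Sum>j\<in>UNIV. c j *s b j)))"
      unfolding PB_def .
    have "\<forall>j. b j \<in> G" using bb by simp
    moreover have "\<forall>x\<in>G. \<exists>c. x = (\<Sum>j\<in>UNIV. c j *s b j)" using bb by simp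
    ultimately show ?thesis using that by blast
  qed
  define C where "C = colmat b"
  have colC: "column j C = b j" for j by (simp add: C_def colmat_def column_def vec_eq_iff)
  have Cv: "C *v y = (\<Sum>j\<in>UNIV. y $ j *s b j)" for y
    by (simp only: matrix_mult_sum colC)
  have iff: "x \<in> G \<longleftrightarrow> (\<exists>y. x = C *v y)" for x
  proof
    assume "x \<in> G"
    then obtain c where "x = (\<Sum>j\<in>UNIV. c j *s b j)" using b2 by blast
    then have "x = C *v (\<chi> j. c j)" by (simp add: Cv)
    then show "\<exists>y. x = C *v y" by blast
  next
    assume "\<exists>y. x = C *v y"
    then obtain y where "x = C *v y" by blast
    then have "x = (\<Sum>j\<in>UNIV. y $ j *s b j)" by (simp only: Cv)
    moreover have "(\<Sum>j\<in>UNIV. y $ j *s b j) \<in> G" by (rule gsum) (simp_all add: gscale b1)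
    ultimately show "x \<in> G" by simp
  qed
  have "\<forall>i::'n. \<exists>y. \<alpha> *s axis i 1 = C *v y" using iff gax by blast
  from choice[OF this] obtain u where u: "\<And>i. \<alpha> *s axis i 1 = C *v u i" by blast
  have "C ** colmat u = mat \<alpha>"
    by (simp add: vec_eq_iff colmat_mult u[symmetric] axis_def mat_def)
  then have "det C * det (colmat u) = \<alpha> ^ CARD('n)" by (metis det_mul det_mat)
  then have "det C \<noteq> 0" using anz by auto
  then show ?thesis using iff by blast
qed

end

lemma cols_div:
  fixes M C :: "'n::finite imat"
  assumes "\<And>j. \<exists>u. M *v axis j 1 = C *v u"
  shows "\<exists>X. M = C ** X"
proof -
  obtain u where u: "\<And>j. M *v axis j 1 = C *v u j" using assms by metis
  have "M = C ** colmat u"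
  proof (rule mat_eq_cols)
    fix k
    show "M *v axis k 1 = (C ** colmat u) *v axis k 1"
      unfolding u by (simp add: col_axis vec_eq_iff column_def colmat_mult)
  qed
  then show ?thesis by blast
qed

lemma coprime_bezout:
  fixes A B :: "'n::finite imat"
  assumes "det A \<noteq> 0" "mat_coprime A B"
  shows "\<exists>X Y. A ** X + B ** Y = mat 1"
proof -
  define G where "G = {A *v x + B *v y | x y. True}"
  interpret lat G "det A"
  proof
    fix x y c assume "x \<in> G" "y \<in> G"
    then obtain x1 x2 y1 y2 where "x = A *v x1 + B *v x2" "y = A *v y1 + B *v y2"
      unfolding G_def by blast
    then show "x + y \<in> G" unfolding G_def
      by (rule_tac CollectI, rule_tac x="x1 + y1" in exI, rule_tac x="x2+y2" in exI)
         (simp add: matrix_vector_right_distrib algebra_simps)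
  next
    fix x c assume "x \<in> G"
    then obtain x1 x2 where "x = A *v x1 + B *v x2" unfolding G_def by blast
    then show "c *s x \<in> G" unfolding G_def
      by (rule_tac CollectI, rule_tac x="c *s x1" in exI, rule_tac x="c *s x2" in exI)
         (simp add: mv_scal vector_add_ldistrib)
  next
    fix i
    have "det A *s axis i 1 = A *v column i (adj A) + B *v 0"
      by (simp add: adj_col[OF assms(1)])
    then show "det A *s axis i 1 \<in> G" unfolding G_def by blast
  next
    show "det A \<noteq> 0" by fact
  qed
  obtain C where C: "det C \<noteq> 0" "\<And>x. x \<in> G \<longleftrightarrow> (\<exists>y. x = C *v y)" using basis by blast
  have "\<exists>X. A = C ** X"
  proof (rule cols_div)
    fix j
    have "A *v axis j 1 = A *v axis j 1 + B *v 0" by simp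
    then have "A *v axis j 1 \<in> G" unfolding G_def by blast
    then show "\<exists>u. A *v axis j 1 = C *v u" using C(2) by blast
  qed
  moreover have "\<exists>X. B = C ** X"
  proof (rule cols_div)
    fix j
    have "B *v axis j 1 = A *v 0 + B *v axis j 1" by simp
    then have "B *v axis j 1 \<in> G" unfolding G_def by blast
    then show "\<exists>u. B *v axis j 1 = C *v u" using C(2) by blast
  qed
  ultimately have "unimodular C" using assms(2) C(1)
    unfolding mat_coprime_def left_divisor_def nonsingular_def by blast
  then obtain Ci where Ci: "C ** Ci = mat 1" using unimod_inv unfolding unimodular_def by blast
  have "\<forall>k. \<exists>x y. axis k 1 = A *v x + B *v y"
  proof
    fix k
    have "axis k 1 = C *v (Ci *v axis k 1)" by (simp add: matrix_vector_mul_assoc Ci)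
    then have "axis k 1 \<in> G" using C(2) by blast
    then show "\<exists>x y. axis k 1 = A *v x + B *v y" unfolding G_def by blast
  qed
  then obtain x y where xy: "\<And>k. axis k 1 = A *v x k + B *v y k" by metis
  have ik: "(A *v x k) $ i + (B *v y k) $ i = (if i = k then 1 else 0)" for i k
  proof -
    have "axis k 1 $ i = (A *v x k + B *v y k) $ i" using xy by simp
    then show ?thesis by (simp add: axis_def)
  qed
  have "A ** colmat x + B ** colmat y = mat 1"
    by (simp add: vec_eq_iff colmat_mult ik mat_def)
  then show ?thesis by blast
qed

definition blk :: "'n::finite imat \<Rightarrow> 'n imat \<Rightarrow> 'n imat \<Rightarrow> 'n imat \<Rightarrow> int^('n+'n)^('n+'n)" where
  "blk P Q R S = (\<chi> i j. case i of Inl a \<Rightarrow> (case j of Inl b \<Rightarrow> P$a$b | Inr b \<Rightarrow> Q$a$b)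
                                | Inr a \<Rightarrow> (case j of Inl b \<Rightarrow> R$a$b | Inr b \<Rightarrow> S$a$b))"

lemma blk_nth [simp]:
  "blk P Q R S $ Inl a $ Inl b = P$a$b" "blk P Q R S $ Inl a $ Inr b = Q$a$b"
  "blk P Q R S $ Inr a $ Inl b = R$a$b" "blk P Q R S $ Inr a $ Inr b = S$a$b"
  by (simp_all add: blk_def)

lemma sum_UNIV_sum: "sum f (UNIV :: ('a::finite + 'b::finite) set) = sum (\<lambda>a. f (Inl a)) UNIV + sum (\<lambda>b. f (Inr b)) UNIV"
proof -
  have "sum f (UNIV :: ('a + 'b) set) = sum f (UNIV <+> UNIV)" by (simp add: UNIV_Plus_UNIV)
  also have "\<dots> = sum (f \<circ> Inl) UNIV + sum (f \<circ> Inr) UNIV" by (rule sum.Plus) auto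
  finally show ?thesis by (simp add: o_def)
qed

lemma blk_mult:
  "blk P Q R S ** blk P' Q' R' S' =
     blk (P**P' + Q**R') (P**Q' + Q**S') (R**P' + S**R') (R**Q' + S**S')"
  unfolding vec_eq_iff
proof (intro allI)
  fix i j :: "'a + 'a"
  show "(blk P Q R S ** blk P' Q' R' S') $ i $ j =
     blk (P**P' + Q**R') (P**Q' + Q**S') (R**P' + S**R') (R**Q' + S**S') $ i $ j"
    by (cases i; cases j) (simp_all add: matrix_matrix_mult_def sum_UNIV_sum)
qed

lemma blk_one: "blk (mat 1) 0 0 (mat 1) = (mat 1 :: int^('n::finite+'n)^('n+'n))"
  unfolding vec_eq_iff
proof (intro allI)
  fix i j :: "'n + 'n"
  show "blk (mat 1) 0 0 (mat 1) $ i $ j = (mat 1 :: int^('n+'n)^('n+'n)) $ i $ j"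
    by (cases i; cases j) (simp_all add: mat_def)
qed

lemma blk_split: "(M::int^('n::finite+'n)^('n+'n)) = blk (\<chi> a b. M$Inl a$Inl b) (\<chi> a b. M$Inl a$Inr b) (\<chi> a b. M$Inr a$Inl b) (\<chi> a b. M$Inr a$Inr b)"
  unfolding vec_eq_iff
proof (intro allI)
  fix i j :: "'n + 'n"
  show "M $ i $ j = blk (\<chi> a b. M$Inl a$Inl b) (\<chi> a b. M$Inl a$Inr b) (\<chi> a b. M$Inr a$Inl b) (\<chi> a b. M$Inr a$Inr b) $ i $ j"
    by (cases i; cases j) simp_all
qed

lemma blk_eq4: "blk P Q R S = blk P' Q' R' S' \<Longrightarrow> S = S'"
  by (simp add: vec_eq_iff) (metis blk_nth(4))

definition swp :: "'a + 'a \<Rightarrow> 'a + 'a" where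
  "swp x = (case x of Inl a \<Rightarrow> Inr a | Inr a \<Rightarrow> Inl a)"

lemma swp_swp: "swp (swp x) = x" by (cases x) (simp_all add: swp_def)

lemma swp_permutes: "swp permutes UNIV"
  by (rule bij_imp_permutes) (auto intro!: o_bij[of swp] simp: swp_swp o_def)

lemma det_conj_swp: "det (\<chi> i j. (M::int^('n::finite+'n)^('n+'n)) $ swp i $ swp j) = det M"
proof -
  have "det (\<chi> i j. M $ swp i $ swp j) = det (\<chi> i. (\<chi> i j. M $ i $ swp j) $ swp i)" by simp
  also have "\<dots> = of_int (sign (swp::'n+'n \<Rightarrow> 'n+'n)) * det (\<chi> i j. M $ i $ swp j)"
    using det_permute_rows[OF swp_permutes, of "\<chi> i j. M $ i $ swp j"] by simp
  also have "\<dots> = of_int (sign (swp::'n+'n \<Rightarrow> 'n+'n)) * (of_int (sign (swp::'n+'n \<Rightarrow> 'n+'n)) * det M)"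
    by (simp add: det_permute_columns[OF swp_permutes])
  also have "\<dots> = det M" by (simp add: mult.assoc[symmetric] sign_idempotent)
  finally show ?thesis .
qed

lemma det_blk_swap: "det (blk A 0 0 (mat 1)) = det (blk (mat 1) 0 0 A)"
proof -
  have "(\<chi> i j. blk A 0 0 (mat 1) $ swp i $ swp j) = blk (mat 1) 0 0 A"
    unfolding vec_eq_iff
  proof (intro allI)
    fix i j :: "'a + 'a"
    show "(\<chi> i j. blk A 0 0 (mat 1) $ swp i $ swp j) $ i $ j = blk (mat 1) 0 0 A $ i $ j"
      by (cases i; cases j) (simp_all add: swp_def)
  qed
  then show ?thesis using det_conj_swp by metis
qed

lemma det_blk_nz:
  fixes A :: "'n::finite imat"
  assumes "det A \<noteq> 0" shows "det (blk A 0 0 (mat 1)) \<noteq> 0"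
proof -
  have "blk A 0 0 (mat 1) ** blk (adj A) 0 0 (mat 1) = blk (mat (det A)) 0 0 (mat 1)"
    by (simp add: blk_mult adj_right[OF assms])
  moreover have "det (blk (mat (det A)) 0 0 (mat 1) :: int^('n+'n)^('n+'n)) \<noteq> 0"
  proof -
    let ?D = "blk (mat (det A)) 0 0 (mat 1) :: int^('n+'n)^('n+'n)"
    have diag: "\<And>i j. i \<noteq> j \<Longrightarrow> ?D $ i $ j = 0"
    proof -
      fix i j :: "'n + 'n" assume "i \<noteq> j" then show "?D $ i $ j = 0"
        by (cases i; cases j) (simp_all add: mat_def)
    qed
    have "\<And>i. ?D $ i $ i \<noteq> 0"
    proof -
      fix i :: "'n + 'n" show "?D $ i $ i \<noteq> 0"
        using assms by (cases i) (simp_all add: mat_def)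
    qed
    then show ?thesis by (simp add: det_diagonal[OF diag])
  qed
  ultimately show ?thesis by (metis det_mul mult_eq_0_iff)
qed

lemma det_unip1: "det (blk (mat 1) B 0 (mat 1)) = 1 \<or> det (blk (mat 1) B 0 (mat 1)) = -1"
proof -
  have "blk (mat 1) B 0 (mat 1) ** blk (mat 1) (-B) 0 (mat 1) = mat 1"
    by (simp add: blk_mult blk_one)
  then have "det (blk (mat 1) B 0 (mat 1)) * det (blk (mat 1) (-B) 0 (mat 1)) = 1"
    by (metis det_mul det_I)
  then show ?thesis by (auto simp: zmult_eq_1_iff)
qed

lemma det_unip2: "det (blk (mat 1) 0 Y (mat 1)) = 1 \<or> det (blk (mat 1) 0 Y (mat 1)) = -1"
proof -
  have "blk (mat 1) 0 Y (mat 1) ** blk (mat 1) 0 (-Y) (mat 1) = mat 1"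
    by (simp add: blk_mult blk_one)
  then have "det (blk (mat 1) 0 Y (mat 1)) * det (blk (mat 1) 0 (-Y) (mat 1)) = 1"
    by (metis det_mul det_I)
  then show ?thesis by (auto simp: zmult_eq_1_iff)
qed

lemma mul_neg_right: "(U::'n::finite imat) ** (- B) = - (U ** B)"
  by (simp add: matrix_matrix_mult_def vec_eq_iff sum_negf)
lemma mul_neg_left: "(- U::'n::finite imat) ** B = - (U ** B)"
  by (simp add: matrix_matrix_mult_def vec_eq_iff sum_negf)

lemma left_bezout:
  fixes A B X Y :: "'n::finite imat"
  assumes dA: "det A \<noteq> 0" and comm: "A ** B = B ** A" and bez: "A ** X + B ** Y = mat 1"
  shows "\<exists>P Q. P ** A + Q ** B = mat 1"
proof -
  let ?N = "blk X (-B) Y A"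
  have e1: "blk A B 0 (mat 1) ** ?N = blk (mat 1) 0 Y A"
    by (simp add: blk_mult bez mul_neg_right comm)
  have e2: "blk A B 0 (mat 1) = blk (mat 1) B 0 (mat 1) ** blk A 0 0 (mat 1)"
    by (simp add: blk_mult)
  have e3: "blk (mat 1) 0 Y A = blk (mat 1) 0 Y (mat 1) ** blk (mat 1) 0 0 A"
    by (simp add: blk_mult)
  define d where "d = det (blk A 0 0 (mat 1))"
  have dnz: "d \<noteq> 0" using det_blk_nz[OF dA] by (simp add: d_def)
  have "det (blk (mat 1) B 0 (mat 1)) * d * det ?N = det (blk (mat 1) 0 Y (mat 1)) * d"
    using arg_cong[OF e1, of det] unfolding e2 e3 det_mul d_def det_blk_swap by simp
  then have "det (blk (mat 1) B 0 (mat 1)) * det ?N = det (blk (mat 1) 0 Y (mat 1))"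
    using dnz by (simp add: mult.commute mult.left_commute)
  then have "det ?N = 1 \<or> det ?N = -1"
    using det_unip1[of B] det_unip2[of Y] by auto
  then obtain Ni where Ni: "Ni ** ?N = mat 1" using unimod_inv by blast
  let ?Uc = "\<chi> a b. Ni$Inr a$Inl b" and ?Ud = "\<chi> a b. Ni$Inr a$Inr b"
  have "blk (\<chi> a b. Ni$Inl a$Inl b) (\<chi> a b. Ni$Inl a$Inr b) ?Uc ?Ud ** ?N = blk (mat 1) 0 0 (mat 1)"
    using Ni blk_split[of Ni] blk_one by metis
  then have "?Uc ** (- B) + ?Ud ** A = mat 1"
    unfolding blk_mult by (rule blk_eq4)
  then have "?Ud ** A + (- ?Uc) ** B = mat 1"
    by (simp add: mul_neg_right mul_neg_left add.commute)
  then show ?thesis by blast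
qed

definition rbez :: "'n::finite imat \<Rightarrow> 'n imat \<Rightarrow> bool" where
  "rbez A B \<longleftrightarrow> (\<exists>X Y. A ** X + B ** Y = mat 1)"

lemma matrix_add_rdistrib: "((A::'n::finite imat) + B) ** C = A ** C + B ** C"
  by (vector matrix_matrix_mult_def sum.distrib[symmetric] field_simps)

lemma rbez_sym: "rbez A B \<Longrightarrow> rbez B A"
  unfolding rbez_def by (metis add.commute)

lemma rbez_one: "rbez A (mat 1)"
  unfolding rbez_def by (rule exI[of _ 0], rule exI[of _ "mat 1"]) simp

lemma rbez_mult:
  fixes A B C :: "'n::finite imat"
  assumes "rbez A B" "rbez A C" "A ** B = B ** A"
  shows "rbez A (B ** C)"
proof -
  obtain X Y where b1: "A ** X + B ** Y = mat 1" using assms(1) unfolding rbez_def by blast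
  obtain X' Y' where b2: "A ** X' + C ** Y' = mat 1" using assms(2) unfolding rbez_def by blast
  have hB: "B = A ** (B ** X') + (B ** C) ** Y'"
  proof -
    have "B = B ** (A ** X' + C ** Y')" by (simp add: b2)
    also have "\<dots> = (B ** A) ** X' + (B ** C) ** Y'" by (simp add: matrix_add_ldistrib matrix_mul_assoc)
    also have "\<dots> = A ** (B ** X') + (B ** C) ** Y'" by (simp add: assms(3)[symmetric] matrix_mul_assoc)
    finally show ?thesis .
  qed
  have "mat 1 = A ** X + (A ** (B ** X') + (B ** C) ** Y') ** Y" using b1 hB by simp
  also have "\<dots> = A ** (X + (B ** X') ** Y) + (B ** C) ** (Y' ** Y)"
    by (simp add: matrix_add_ldistrib matrix_add_rdistrib matrix_mul_assoc add.assoc)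
  finally show ?thesis unfolding rbez_def by metis
qed

lemma mpl_Nil [simp]: "mat_prod_list [] = mat 1"
  by (simp add: mat_prod_list_def)
lemma mpl_Cons [simp]: "mat_prod_list (a # Ns) = a ** mat_prod_list Ns"
  by (simp add: mat_prod_list_def)

lemma rbez_prod:
  "(\<forall>N\<in>set Ns. rbez A N \<and> A ** N = N ** A) \<Longrightarrow> rbez A (mat_prod_list Ns)"
  by (induct Ns) (auto simp: rbez_one intro: rbez_mult)

lemma comm_prod:
  fixes A :: "'n::finite imat"
  shows "(\<forall>N\<in>set Ns. A ** N = N ** A) \<Longrightarrow> A ** mat_prod_list Ns = mat_prod_list Ns ** A"
proof (induct Ns)
  case Nil then show ?case by simp
next
  case (Cons a Ns)
  have ih: "A ** mat_prod_list Ns = mat_prod_list Ns ** A" using Cons by auto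
  have ca: "A ** a = a ** A" using Cons.prems by simp
  have "A ** (a ** mat_prod_list Ns) = (A ** a) ** mat_prod_list Ns" by (simp add: matrix_mul_assoc)
  also have "\<dots> = a ** (A ** mat_prod_list Ns)" by (simp add: ca matrix_mul_assoc)
  also have "\<dots> = (a ** mat_prod_list Ns) ** A" by (simp add: ih matrix_mul_assoc)
  finally show ?case by simp
qed

lemma det_prod: "det (mat_prod_list Ns) = prod_list (map det (Ns :: 'n::finite imat list))"
  by (induct Ns) (simp_all add: det_mul)

lemma det_prod_nz: "(\<forall>N\<in>set Ns. det N \<noteq> 0) \<Longrightarrow> det (mat_prod_list (Ns :: 'n::finite imat list)) \<noteq> 0"
  by (induct Ns) (simp_all add: det_mul)

lemma factor_out:
  fixes N :: "nat \<Rightarrow> 'n::finite imat"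
  assumes "\<forall>a\<in>set ns. \<forall>b\<in>set ns. N a ** N b = N b ** N a" "i \<in> set ns"
  shows "\<exists>Z. mat_prod_list (map N ns) = N i ** Z"
  using assms
proof (induct ns)
  case Nil then show ?case by simp
next
  case (Cons a ns)
  show ?case
  proof (cases "i = a")
    case True then show ?thesis by auto
  next
    case False
    then have "i \<in> set ns" using Cons by simp
    then obtain Z where Z: "mat_prod_list (map N ns) = N i ** Z" using Cons by auto
    have "a \<in> set (a # ns)" "i \<in> set (a # ns)" using \<open>i \<in> set ns\<close> by auto
    then have c: "N a ** N i = N i ** N a" using Cons.prems(1) by blast
    have "mat_prod_list (map N (a # ns)) = N a ** (N i ** Z)" by (simp add: Z)
    also have "\<dots> = N i ** (N a ** Z)" by (simp add: matrix_mul_assoc c)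
    finally show ?thesis by blast
  qed
qed

lemma mat_mv: "(mat c :: 'n::finite imat) *v x = c *s x"
  by (simp add: mat_def matrix_vector_mult_def vec_eq_iff if_distrib if_distribR sum.delta cong: if_cong)

lemma adj_comm:
  fixes A B :: "'n::finite imat"
  assumes "det B \<noteq> 0" "A ** B = B ** A"
  shows "A ** adj B = adj B ** A"
proof (rule cancel_left[OF assms(1)])
  have "B ** (A ** adj B) = A ** (B ** adj B)" by (simp add: matrix_mul_assoc assms(2))
  also have "\<dots> = A ** mat (det B)" by (simp add: adj_right[OF assms(1)])
  also have "\<dots> = mat (det B) ** A" by (simp add: scal_mat_comm)
  also have "\<dots> = B ** (adj B ** A)" by (simp add: matrix_mul_assoc adj_right[OF assms(1)])
  finally show "B ** (A ** adj B) = B ** (adj B ** A)" .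
qed

lemma inter2:
  fixes A B P Q :: "'n::finite imat"
  assumes dB: "det B \<noteq> 0" and comm: "A ** B = B ** A" and lb: "P ** A + Q ** B = mat 1"
    and vx: "v = A *v x" and vy: "v = B *v y"
  shows "v = (A ** B) *v (P *v y + Q *v x)"
proof -
  let ?b = "det B"
  let ?w = "P *v y + Q *v x"
  define z where "z = adj B *v x"
  have e1: "A *v z = ?b *s y"
  proof -
    have "A *v z = (adj B ** A) *v x" by (simp add: z_def matrix_vector_mul_assoc adj_comm[OF dB comm])
    also have "\<dots> = adj B *v v" by (simp add: vx matrix_vector_mul_assoc)
    also have "\<dots> = (adj B ** B) *v y" by (simp add: vy matrix_vector_mul_assoc)
    also have "\<dots> = ?b *s y" by (simp add: adj_left[OF dB] mat_mv)
    finally show ?thesis .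
  qed
  have e2: "B *v z = ?b *s x" by (simp add: z_def matrix_vector_mul_assoc adj_right[OF dB] mat_mv)
  have "z = (P ** A + Q ** B) *v z" by (simp add: lb)
  also have "\<dots> = P *v (A *v z) + Q *v (B *v z)"
    by (simp add: matrix_vector_mult_add_rdistrib matrix_vector_mul_assoc)
  also have "\<dots> = ?b *s ?w" by (simp add: e1 e2 mv_scal vector_add_ldistrib)
  finally have zw: "z = ?b *s ?w" .
  have "?b *s x = ?b *s (B *v ?w)" by (metis e2 zw mv_scal)
  then have "x = B *v ?w" using dB by (simp add: vec_eq_iff)
  then have "A *v x = (A ** B) *v ?w" by (metis matrix_vector_mul_assoc)
  then show ?thesis using vx by simp
qed

lemma inter_list:
  fixes N :: "nat \<Rightarrow> 'n::finite imat"
  assumes "\<forall>a\<in>set ns. det (N a) \<noteq> 0"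
    and "\<forall>a\<in>set ns. \<forall>b\<in>set ns. a \<noteq> b \<longrightarrow> N a ** N b = N b ** N a \<and> rbez (N a) (N b)"
    and "distinct ns"
    and "\<forall>a\<in>set ns. \<exists>x. v = N a *v x"
  shows "\<exists>z. v = mat_prod_list (map N ns) *v z"
  using assms
proof (induct ns)
  case Nil then show ?case by (rule_tac x=v in exI) simp
next
  case (Cons a ns)
  let ?P = "mat_prod_list (map N ns)"
  obtain x where x: "v = ?P *v x" using Cons by auto
  obtain y where y: "v = N a *v y" using Cons(5) by auto
  have an: "a \<notin> set ns" using Cons(4) by simp
  have rb: "rbez (N a) ?P" using Cons(3) an by (intro rbez_prod) auto
  have cm: "N a ** ?P = ?P ** N a" using Cons(3) an by (intro comm_prod) auto
  have dP: "det ?P \<noteq> 0" using Cons(2) by (intro det_prod_nz) auto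
  have da: "det (N a) \<noteq> 0" using Cons(2) by simp
  obtain X Y where "N a ** X + ?P ** Y = mat 1" using rb unfolding rbez_def by blast
  then obtain Pl Ql where lb: "Pl ** N a + Ql ** ?P = mat 1" using left_bezout[OF da cm] by blast
  have "v = (N a ** ?P) *v (Pl *v x + Ql *v y)" by (rule inter2[OF dP cm lb y x])
  then show ?case by auto
qed

lemma mv_sum: "(A::'n::finite imat) *v sum f S = sum (\<lambda>i. A *v f i) S"
  by (induct S rule: infinite_finite_induct) (simp_all add: matrix_vector_right_distrib)

lemma grp1: "(r - c) + d - m = (r - m) - c + (d::'a::ab_group_add)"
  by (simp add: algebra_simps)
lemma grp2: "- y - c + d = d - c - (y::'a::ab_group_add)"
  by (simp add: algebra_simps)

lemma lattice_R:
  fixes N :: "nat \<Rightarrow> 'n::finite imat"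
  assumes "\<forall>a\<in>set ns. det (N a) \<noteq> 0"
    and "\<forall>a\<in>set ns. \<forall>b\<in>set ns. a \<noteq> b \<longrightarrow> N a ** N b = N b ** N a \<and> rbez (N a) (N b)"
    and "distinct ns" and "unimodular U" and "R = mat_prod_list (map N ns) ** U"
    and "\<forall>a\<in>set ns. \<exists>x. v = N a *v x"
  shows "\<exists>z. v = R *v z"
proof -
  obtain z where z: "v = mat_prod_list (map N ns) *v z" using inter_list[OF assms(1-3) assms(6)] by blast
  obtain Ui where Ui: "U ** Ui = mat 1" using unimod_inv assms(4) unfolding unimodular_def by blast
  have e: "U *v (Ui *v z) = z" by (simp add: matrix_vector_mul_assoc Ui)
  have "v = R *v (Ui *v z)" by (simp add: z assms(5) matrix_vector_mul_assoc[symmetric] e)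
  then show ?thesis by blast
qed

lemma unimod_all:
  fixes A :: "'n::finite imat"
  assumes "unimodular A" shows "\<exists>x. v = A *v x"
proof -
  obtain Ai where Ai: "A ** Ai = mat 1" using unimod_inv assms unfolding unimodular_def by blast
  have "v = A *v (Ai *v v)" by (simp add: matrix_vector_mul_assoc Ai)
  then show ?thesis by blast
qed

theorem corollary2:
  fixes M U :: "'n::finite imat" and Gam :: "nat \<Rightarrow> 'n imat" and L :: nat
  defines "F \<equiv> (\<lambda>j. if j = 0 then M else Gam j)"
  defines "Ms \<equiv> (\<lambda>i. M ** Gam i)"
  defines "N \<equiv> (\<lambda>i. if i = 1 then M ** Gam 1 else Gam i)"
  defines "W \<equiv> (\<lambda>i. mat_prod_list (map N (filter (\<lambda>j. j \<noteq> i) [1..<L+1])))"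
  defines "R \<equiv> M ** mat_prod_list (map Gam [1..<L+1]) ** U"
  defines "admissible \<equiv> (\<lambda>What :: nat \<Rightarrow> 'n imat. \<forall>i\<in>{1..L}.
             (\<not> unimodular (N i) \<longrightarrow> (\<exists>Q. W i ** What i + N i ** Q = mat 1)) \<and>
             (unimodular (N i) \<longrightarrow> What i = 0))"
  assumes "L \<ge> 1"
    and "\<forall>j\<in>{0..L}. nonsingular (F j)"
    and "\<forall>j\<in>{0..L}. \<forall>k\<in>{0..L}. j \<noteq> k \<longrightarrow> F j ** F k = F k ** F j \<and> mat_coprime (F j) (F k)"
    and "unimodular U"
  shows "is_lcrm Ms L R \<and>
         (\<exists>What. admissible What) \<and>
         (\<forall>What. admissible What \<longrightarrow>
            (\<forall>m\<in>fund_set R.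
               m = mat_rem (\<Sum>i = 1..L. (W i ** What i) *v mat_rem m (Ms i)) R)) \<and>
         (\<forall>m\<in>fund_set R. \<forall>m'\<in>fund_set R.
            (\<forall>i\<in>{1..L}. mat_rem m (Ms i) = mat_rem m' (Ms i)) \<longrightarrow> m = m')"
proof -
  note hL = assms(7) and hF = assms(8) and hC = assms(9) and hU = assms(10)
  define ns where "ns = [1..<L+1]"
  have setns: "set ns = {1..L}" by (auto simp: ns_def)
  have dns: "distinct ns" by (simp add: ns_def)
  have dM: "det M \<noteq> 0" using hF unfolding F_def nonsingular_def by (metis atLeastAtMost_iff le0)
  have dG: "det (Gam j) \<noteq> 0" if "j \<in> {1..L}" for j
    using hF that unfolding F_def nonsingular_def by (metis atLeastAtMost_iff le0 not_one_le_zero)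
  have cMG: "M ** Gam j = Gam j ** M \<and> mat_coprime M (Gam j) \<and> mat_coprime (Gam j) M"
    if "j \<in> {1..L}" for j
  proof -
    have a: "0 \<in> {0..L}" "j \<in> {0..L}" "0 \<noteq> j" "j \<noteq> 0" using that by auto
    have h1: "F 0 ** F j = F j ** F 0 \<and> mat_coprime (F 0) (F j)" using hC a by blast
    have h2: "mat_coprime (F j) (F 0)" using hC a by blast
    show ?thesis using h1 h2 a(4) by (simp add: F_def)
  qed
  have cGG: "Gam j ** Gam k = Gam k ** Gam j \<and> mat_coprime (Gam j) (Gam k)"
    if "j \<in> {1..L}" "k \<in> {1..L}" "j \<noteq> k" for j k
  proof -
    have a: "j \<in> {0..L}" "k \<in> {0..L}" "j \<noteq> 0" "k \<noteq> 0" using that by auto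
    have h1: "F j ** F k = F k ** F j \<and> mat_coprime (F j) (F k)" using hC a that(3) by blast
    show ?thesis using h1 a by (simp add: F_def)
  qed
  have bMG: "rbez M (Gam j)" "rbez (Gam j) M" if "j \<in> {1..L}" for j
    using coprime_bezout[OF dM] coprime_bezout[OF dG[OF that]] cMG[OF that] unfolding rbez_def by blast+
  have bGG: "rbez (Gam j) (Gam k)" if "j \<in> {1..L}" "k \<in> {1..L}" "j \<noteq> k" for j k
    using coprime_bezout[OF dG[OF that(1)]] cGG[OF that] unfolding rbez_def by blast
  have dN: "det (N i) \<noteq> 0" if "i \<in> {1..L}" for i
    using dM dG[OF that] dG[of 1] hL unfolding N_def by (auto simp: det_mul)
  have N1: "N 1 ** Gam j = Gam j ** N 1 \<and> rbez (N 1) (Gam j)" if "j \<in> {1..L}" "j \<noteq> 1" for j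
  proof -
    have j1: "1 \<in> {1..L}" using hL by simp
    have c1: "M ** Gam j = Gam j ** M" using cMG[OF that(1)] by simp
    have c2: "Gam 1 ** Gam j = Gam j ** Gam 1" using cGG[OF j1 that(1)] that(2) by simp
    have "N 1 ** Gam j = M ** (Gam 1 ** Gam j)" by (simp add: N_def matrix_mul_assoc)
    also have "\<dots> = M ** (Gam j ** Gam 1)" by (simp only: c2)
    also have "\<dots> = (M ** Gam j) ** Gam 1" by (simp only: matrix_mul_assoc)
    also have "\<dots> = Gam j ** N 1" by (simp add: c1 N_def matrix_mul_assoc)
    finally have "N 1 ** Gam j = Gam j ** N 1" .
    moreover have "rbez (Gam j) (M ** Gam 1)"
      using rbez_mult[OF bMG(2)[OF that(1)] bGG[OF that(1) j1] c1[symmetric]] that(2) by simp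
    ultimately show ?thesis by (simp add: N_def rbez_sym)
  qed
  have Npair: "N a ** N b = N b ** N a \<and> rbez (N a) (N b)"
    if "a \<in> {1..L}" "b \<in> {1..L}" "a \<noteq> b" for a b
  proof (cases "a = 1")
    case True
    then have "N b = Gam b" using that(3) by (simp add: N_def)
    then show ?thesis using N1[OF that(2)] that(3) True by simp
  next
    case a: False
    show ?thesis
    proof (cases "b = 1")
      case True
      then have "N a = Gam a" using a by (simp add: N_def)
      then show ?thesis using N1[OF that(1) a] True by (simp add: rbez_sym)
    next
      case False
      then show ?thesis using a cGG[OF that] bGG[OF that] by (simp add: N_def)
    qed
  qed
  have Ncomm: "\<forall>a\<in>set ns. \<forall>b\<in>set ns. N a ** N b = N b ** N a"
  proof (intro ballI)
    fix a b assume "a \<in> set ns" "b \<in> set ns"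
    then show "N a ** N b = N b ** N a" using Npair[of a b] setns by (cases "a = b") auto
  qed
  have Nhyp: "\<forall>a\<in>set ns. \<forall>b\<in>set ns. a \<noteq> b \<longrightarrow> N a ** N b = N b ** N a \<and> rbez (N a) (N b)"
  proof (intro ballI impI)
    fix a b assume "a \<in> set ns" "b \<in> set ns" "a \<noteq> b"
    then show "N a ** N b = N b ** N a \<and> rbez (N a) (N b)" using Npair[of a b] setns by auto
  qed
  have NdetH: "\<forall>a\<in>set ns. det (N a) \<noteq> 0" using dN setns by blast
  have Rprod: "R = mat_prod_list (map N ns) ** U"
  proof -
    have ns1: "ns = 1 # [Suc 1..<L+1]" using hL unfolding ns_def by (subst upt_conv_Cons) auto
    have e: "map N [Suc 1..<L+1] = map Gam [Suc 1..<L+1]" by (rule map_cong) (auto simp: N_def)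
    have N1e: "N 1 = M ** Gam 1" by (simp add: N_def)
    have "mat_prod_list (map N ns) = N 1 ** mat_prod_list (map Gam [Suc 1..<L+1])"
      unfolding ns1 list.map mpl_Cons e ..
    also have "\<dots> = M ** (Gam 1 ** mat_prod_list (map Gam [Suc 1..<L+1]))"
      unfolding N1e matrix_mul_assoc ..
    also have "\<dots> = M ** mat_prod_list (map Gam ns)"
      unfolding ns1 list.map mpl_Cons ..
    finally have "mat_prod_list (map N ns) = M ** mat_prod_list (map Gam ns)" .
    then show ?thesis by (simp add: R_def ns_def)
  qed
  have dU: "det U \<noteq> 0" using hU unfolding unimodular_def by auto
  have dR: "det R \<noteq> 0" using Rprod det_prod_nz[of "map N ns"] NdetH dU by (auto simp: det_mul)
  have lat: "\<exists>z. v = R *v z" if "\<forall>a\<in>{1..L}. \<exists>x. v = N a *v x" for v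
    using lattice_R[OF NdetH Nhyp dns hU Rprod] that setns by blast
  have MsN: "\<exists>X. Ms i = N i ** X" if "i \<in> {1..L}" for i
  proof (cases "i = 1")
    case True then show ?thesis by (rule_tac x="mat 1" in exI) (simp add: Ms_def N_def)
  next
    case False then show ?thesis using cMG[OF that] by (rule_tac x="M" in exI) (simp add: Ms_def N_def)
  qed
  have MsNv: "\<exists>y. v = N i *v y" if ii: "i \<in> {1..L}" and vv: "v = Ms i *v x" for i v x
  proof -
    obtain X where "Ms i = N i ** X" using MsN[OF ii] by blast
    then have "v = N i *v (X *v x)" using vv by (simp add: matrix_vector_mul_assoc)
    then show ?thesis by blast
  qed
  have dMs: "det (Ms i) \<noteq> 0" if "i \<in> {1..L}" for i using dM dG[OF that] by (simp add: Ms_def det_mul)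
  have P1: "is_lcrm Ms L R"
    unfolding is_lcrm_def
  proof (intro conjI ballI allI impI)
    show "nonsingular R" using dR by (simp add: nonsingular_def)
  next
    fix i assume i: "i \<in> {1..L}"
    have gc: "\<forall>a\<in>set ns. \<forall>b\<in>set ns. Gam a ** Gam b = Gam b ** Gam a"
    proof (intro ballI)
      fix a b assume "a \<in> set ns" "b \<in> set ns"
      then show "Gam a ** Gam b = Gam b ** Gam a" using cGG[of a b] setns by (cases "a = b") auto
    qed
    obtain Z where Z: "mat_prod_list (map Gam ns) = Gam i ** Z"
      using factor_out[OF gc] i setns by blast
    have "R = M ** (Gam i ** Z) ** U" unfolding R_def ns_def[symmetric] Z ..
    also have "\<dots> = Ms i ** (Z ** U)" unfolding Ms_def matrix_mul_assoc ..
    finally have "R = Ms i ** (Z ** U)" .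
    then show "\<exists>P. R = Ms i ** P" by blast
  next
    fix R' :: "'n imat"
    assume a: "nonsingular R' \<and> (\<forall>i\<in>{1..L}. \<exists>P. R' = Ms i ** P)"
    have "\<exists>u. R' *v axis j 1 = R *v u" for j
    proof (rule lat, intro ballI)
      fix i assume i: "i \<in> {1..L}"
      obtain P where "R' = Ms i ** P" using a i by blast
      then have "R' *v axis j 1 = Ms i *v (P *v axis j 1)" by (simp add: matrix_vector_mul_assoc)
      then show "\<exists>y. R' *v axis j 1 = N i *v y" by (rule MsNv[OF i])
    qed
    then show "\<exists>A. R' = R ** A" by (rule cols_div)
  qed
  have Wfac: "\<exists>Z. W i = N j ** Z" if "i \<in> {1..L}" "j \<in> {1..L}" "i \<noteq> j" for i j
  proof -
    have sub: "set (filter (\<lambda>j. j \<noteq> i) ns) \<subseteq> set ns" by (rule filter_is_subset)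
    have "\<forall>a\<in>set (filter (\<lambda>j. j \<noteq> i) ns). \<forall>b\<in>set (filter (\<lambda>j. j \<noteq> i) ns). N a ** N b = N b ** N a"
      using Ncomm sub by blast
    moreover have "j \<in> set (filter (\<lambda>j. j \<noteq> i) ns)" using that setns by auto
    ultimately show ?thesis unfolding W_def ns_def[symmetric] by (rule factor_out)
  qed
  have Wbez: "rbez (W i) (N i)" if "i \<in> {1..L}" for i
  proof -
    have "rbez (N i) (mat_prod_list (map N (filter (\<lambda>j. j \<noteq> i) ns)))"
    proof (rule rbez_prod, intro ballI)
      fix Nx assume "Nx \<in> set (map N (filter (\<lambda>j. j \<noteq> i) ns))"
      then obtain j where j: "j \<in> set ns" "j \<noteq> i" "Nx = N j" by auto
      have "i \<in> set ns" using that setns by simp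
      then have "N i ** N j = N j ** N i \<and> rbez (N i) (N j)" using Nhyp j(1,2) by metis
      then show "rbez (N i) Nx \<and> N i ** Nx = Nx ** N i" using j(3) by simp
    qed
    then show ?thesis unfolding W_def ns_def[symmetric] by (rule rbez_sym)
  qed
  have P2: "\<exists>What. admissible What"
  proof -
    define What where "What = (\<lambda>i. if unimodular (N i) then 0 else (SOME X. \<exists>Q. W i ** X + N i ** Q = mat 1))"
    have "admissible What" unfolding admissible_def
    proof (intro ballI conjI impI)
      fix i assume i: "i \<in> {1..L}" and nu: "\<not> unimodular (N i)"
      have ex: "\<exists>X Q. W i ** X + N i ** Q = mat 1" using Wbez[OF i] unfolding rbez_def .
      show "\<exists>Q. W i ** What i + N i ** Q = mat 1"
        using someI_ex[OF ex] nu by (simp add: What_def)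
    next
      fix i assume "unimodular (N i)" then show "What i = 0" by (simp add: What_def)
    qed
    then show ?thesis by blast
  qed
  have P3: "m = mat_rem (\<Sum>i = 1..L. (W i ** What i) *v mat_rem m (Ms i)) R"
    if adm: "admissible What" and m: "m \<in> fund_set R" for What m
  proof -
    let ?r = "\<lambda>i. mat_rem m (Ms i)"
    let ?s = "\<Sum>i = 1..L. (W i ** What i) *v ?r i"
    have "\<exists>z. ?s - m = R *v z"
    proof (rule lat, intro ballI)
      fix j assume j: "j \<in> {1..L}"
      show "\<exists>x. ?s - m = N j *v x"
      proof (cases "unimodular (N j)")
        case True then show ?thesis by (rule unimod_all)
      next
        case nu: False
        obtain Q where Q: "W j ** What j + N j ** Q = mat 1" using adm j nu unfolding admissible_def by blast
        obtain zj where zj: "m - ?r j = Ms j *v zj" using mat_rem_prop[OF dMs[OF j]] by blast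
        obtain yj where yj: "m - ?r j = N j *v yj" using MsNv[OF j zj] by blast
        define Zf where "Zf = (\<lambda>i. SOME Z. W i = N j ** Z)"
        have Zf: "W i = N j ** Zf i" if ij: "i \<in> {1..L} - {j}" for i
        proof -
          have "i \<in> {1..L}" "i \<noteq> j" using ij by auto
          then have ex: "\<exists>Z. W i = N j ** Z" using Wfac[of i j] j by blast
          show ?thesis unfolding Zf_def by (rule someI_ex[OF ex])
        qed
        have tj: "(W j ** What j) *v ?r j = ?r j - N j *v (Q *v ?r j)"
        proof -
          have "W j ** What j = mat 1 - N j ** Q" using Q by (metis add_diff_cancel_right')
          then show ?thesis by (simp add: matrix_vector_mult_diff_rdistrib matrix_vector_mul_assoc)
        qed
        have rest: "(\<Sum>i\<in>{1..L} - {j}. (W i ** What i) *v ?r i) = N j *v (\<Sum>i\<in>{1..L} - {j}. (Zf i ** What i) *v ?r i)"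
          unfolding mv_sum by (rule sum.cong) (simp_all add: Zf matrix_vector_mul_assoc matrix_mul_assoc)
        let ?A = "\<Sum>i\<in>{1..L} - {j}. (Zf i ** What i) *v ?r i"
        have sdec: "?s = (W j ** What j) *v ?r j + (\<Sum>i\<in>{1..L} - {j}. (W i ** What i) *v ?r i)"
          using j by (simp add: sum.remove)
        have s1: "?s - m = (?r j - m) - N j *v (Q *v ?r j) + N j *v ?A"
          unfolding sdec tj rest by (rule grp1)
        have s2: "?r j - m = - (N j *v yj)" using yj by (metis minus_diff_eq)
        have "?s - m = N j *v ?A - N j *v (Q *v ?r j) - N j *v yj"
          unfolding s1 s2 by (rule grp2)
        also have "\<dots> = N j *v (?A - Q *v ?r j - yj)" by (simp only: matrix_vector_mult_diff_distrib)
        finally show ?thesis by blast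
      qed
    qed
    then obtain z where z: "?s - m = R *v z" by blast
    show ?thesis using mat_rem_eq[OF dR m z] by simp
  qed
  have P4: "m = m'" if m: "m \<in> fund_set R" and m': "m' \<in> fund_set R"
    and eq: "\<forall>i\<in>{1..L}. mat_rem m (Ms i) = mat_rem m' (Ms i)" for m m'
  proof -
    have "\<exists>z. m - m' = R *v z"
    proof (rule lat, intro ballI)
      fix i assume i: "i \<in> {1..L}"
      obtain z where z: "m - mat_rem m (Ms i) = Ms i *v z" using mat_rem_prop[OF dMs[OF i]] by blast
      obtain z' where z': "m' - mat_rem m' (Ms i) = Ms i *v z'" using mat_rem_prop[OF dMs[OF i]] by blast
      have "m - m' = (m - mat_rem m (Ms i)) - (m' - mat_rem m' (Ms i))" using eq i by simp
      then have "m - m' = Ms i *v (z - z')" by (simp add: z z' matrix_vector_mult_diff_distrib)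
      then show "\<exists>x. m - m' = N i *v x" by (rule MsNv[OF i])
    qed
    then obtain z where "m - m' = R *v z" by blast
    then show ?thesis by (rule fund_rem_uniq[OF dR m m'])
  qed
  show ?thesis using P1 P2 P3 P4 by blast
qed

end
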